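(* Consider $\dot x=f(t,x,u)$, $t\in J$. Assume there exist a $C^1$ function $V:J\times\mathbb{R}^n\to[0,\infty)$, $\alpha_1,\alpha_2\in\mathcal K_\infty$, $\rho\in\mathcal K$, and a uniformly exponentially stable function $\mu\in\mathbb{PC}(J,\mathbb{R})$ such that for all $(t,x)\in J\times\mathbb{R}^n$, $\alpha_1(|x|)\le V(t,x)\le\alpha_2(|x|)$, and for all $(t,x,u)\in J\times\mathbb{R}^n\times\mathbb{R}^m$ with $V(t,x)\ge\rho(|u|)$, $$\frac{\partial V}{\partial t}(t,x)+\frac{\partial V}{\partial x}(t,x)f(t,x,u)\le\mu(t)V(t,x).$$ Then the system is input-to-state stable: there exist $\sigma\in\mathcal{KL}$ and $\gamma_1\in\mathcal K$ such that for every locally essentially bounded input $u$ and every initial state, $|x(t)|\le\sigma(|x(t_0)|,t-t_0)+\gamma_1(\|u\|_{[t_0,t]})$ for all $t\ge t_0\in J$.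
   Context: $J=[t^{\#},\infty)$; $f:J\times\mathbb{R}^n\times\mathbb{R}^m\to\mathbb{R}^n$ continuous, locally Lipschitz in $x$ for bounded $u$, $f(t,0,0)=0$; inputs $u:J\to\mathbb{R}^m$ are locally essentially bounded, and $\|u\|_{[t_0,t]}=\sup\{|u(s)|:s\in[t_0,t]\}$. Class $\mathcal K$: $\alpha:[0,\infty)\to[0,\infty)$ continuous, nondecreasing, $\alpha(0)=0$; class $\mathcal K_\infty$: continuous, strictly increasing, $\alpha(0)=0$, unbounded; class $\mathcal{KL}$: $\sigma(\cdot,t)\in\mathcal K$ for each $t$, $\sigma(s,\cdot)$ nonincreasing and tending to $0$. $\mu\in\mathbb{PC}(J,\mathbb{R})$ (piecewise continuous) is uniformly exponentially stable if there exist $\alpha>0$, $\beta\ge0$ with $\int_{t_0}^t\mu(s)ds\le-\alpha(t-t_0)+\beta$ for all $t\ge t_0\in J$. *)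

theory Defs
  imports "HOL-Analysis.Analysis"
begin

definition classK :: "(real \<Rightarrow> real) \<Rightarrow> bool" where
  "classK a \<longleftrightarrow> continuous_on {0..} a \<and> mono_on {0..} a \<and> a 0 = 0 \<and> (\<forall>s\<ge>0. a s \<ge> 0)"

definition classKinf :: "(real \<Rightarrow> real) \<Rightarrow> bool" where
  "classKinf a \<longleftrightarrow> continuous_on {0..} a \<and> strict_mono_on {0..} a \<and> a 0 = 0
      \<and> (\<forall>B. \<exists>s\<ge>0. a s > B)"

definition classKL :: "(real \<Rightarrow> real \<Rightarrow> real) \<Rightarrow> bool" where
  "classKL \<sigma> \<longleftrightarrow> (\<forall>t\<ge>0. classK (\<lambda>s. \<sigma> s t))
      \<and> (\<forall>s\<ge>0. antimono_on {0..} (\<sigma> s) \<and> ((\<sigma> s) \<longlongrightarrow> 0) at_top)"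

definition piecewise_continuous_on_J :: "real \<Rightarrow> (real \<Rightarrow> real) \<Rightarrow> bool" where
  "piecewise_continuous_on_J ts \<mu> \<longleftrightarrow>
     (\<forall>b. \<exists>S. finite S \<and> continuous_on ({ts..b} - S) \<mu> \<and>
        (\<forall>s\<in>S. (\<exists>l. (\<mu> \<longlongrightarrow> l) (at_left s)) \<and> (\<exists>r. (\<mu> \<longlongrightarrow> r) (at_right s))))"

definition uniformly_exp_stable :: "real \<Rightarrow> (real \<Rightarrow> real) \<Rightarrow> bool" where
  "uniformly_exp_stable ts \<mu> \<longleftrightarrow>
     (\<exists>a>0. \<exists>\<beta>\<ge>0. \<forall>t0 t. ts \<le> t0 \<longrightarrow> t0 \<le> t \<longrightarrow> integral {t0..t} \<mu> \<le> - a * (t - t0) + \<beta>)"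

definition loc_lipschitz_x :: "real \<Rightarrow> (real \<Rightarrow> 'a::metric_space \<Rightarrow> 'b::real_normed_vector \<Rightarrow> 'c::metric_space) \<Rightarrow> bool" where
  "loc_lipschitz_x ts f \<longleftrightarrow>
     (\<forall>t x R. ts \<le> t \<longrightarrow> (\<exists>\<delta>>0. \<exists>L. \<forall>s y z v. ts \<le> s \<and> \<bar>s - t\<bar> < \<delta> \<and> dist y x < \<delta> \<and> dist z x < \<delta>
          \<and> norm v \<le> R \<longrightarrow> dist (f s y v) (f s z v) \<le> L * dist y z))"

definition loc_ess_bounded :: "real \<Rightarrow> (real \<Rightarrow> 'b::euclidean_space) \<Rightarrow> bool" where
  "loc_ess_bounded ts u \<longleftrightarrow> u \<in> borel_measurable (lebesgue_on {ts..}) \<and>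
     (\<forall>b. \<exists>B. AE s in lebesgue. s \<in> {ts..b} \<longrightarrow> norm (u s) \<le> B)"

end

theory Submission
  imports Defs
begin


lemma pc_local_bound:
  fixes \<mu> :: "real \<Rightarrow> real" and p ts b :: real
  assumes S: "finite S" "continuous_on ({ts..b} - S) \<mu>"
    "\<forall>s\<in>S. (\<exists>l. (\<mu> \<longlongrightarrow> l) (at_left s)) \<and> (\<exists>r. (\<mu> \<longlongrightarrow> r) (at_right s))"
    and p: "p \<in> {ts..b}"
  shows "\<exists>d>0. \<exists>B. \<forall>q\<in>{ts..b}. \<bar>q - p\<bar> < d \<longrightarrow> \<bar>\<mu> q\<bar> \<le> B"
proof -
  obtain d0 where d0: "d0 > 0" "\<forall>x\<in>S. x \<noteq> p \<longrightarrow> d0 \<le> dist p x"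
    using finite_set_avoid[OF S(1)] by blast
  show ?thesis
  proof (cases "p \<in> S")
    case False
    then have "p \<in> {ts..b} - S" using p by auto
    then obtain d where d: "d > 0" "\<forall>x'\<in>{ts..b} - S. dist x' p < d \<longrightarrow> dist (\<mu> x') (\<mu> p) < 1"
      using S(2) unfolding continuous_on_iff by (meson zero_less_one)
    show ?thesis
    proof (rule exI[of _ "min d d0"], intro conjI exI[of _ "\<bar>\<mu> p\<bar> + 1"] ballI impI)
      show "min d d0 > 0" using d d0 by simp
      fix q assume q: "q \<in> {ts..b}" "\<bar>q - p\<bar> < min d d0"
      have "q \<notin> S"
      proof
        assume "q \<in> S"
        moreover have "q \<noteq> p" using False \<open>q \<in> S\<close> by auto
        ultimately have "d0 \<le> dist p q" using d0 by auto
        then show False using q by (simp add: dist_real_def)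
      qed
      then have "dist (\<mu> q) (\<mu> p) < 1" using d q by (simp add: dist_real_def)
      then show "\<bar>\<mu> q\<bar> \<le> \<bar>\<mu> p\<bar> + 1" by (simp add: dist_real_def)
    qed
  next
    case True
    then obtain l r where l: "(\<mu> \<longlongrightarrow> l) (at_left p)" and r: "(\<mu> \<longlongrightarrow> r) (at_right p)"
      using S(3) by blast
    have "\<forall>\<^sub>F q in at_left p. dist (\<mu> q) l < 1" using l tendsto_iff by (metis zero_less_one)
    then obtain b1 where b1: "b1 < p" "\<forall>q>b1. q < p \<longrightarrow> dist (\<mu> q) l < 1"
      unfolding eventually_at_left_field by blast
    define d1 where "d1 = p - b1"
    have d1: "d1 > 0" "\<forall>q. q < p \<and> p - d1 < q \<longrightarrow> dist (\<mu> q) l < 1"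
      using b1 by (auto simp: d1_def)
    have "\<forall>\<^sub>F q in at_right p. dist (\<mu> q) r < 1" using r tendsto_iff by (metis zero_less_one)
    then obtain b2 where b2: "b2 > p" "\<forall>q<b2. p < q \<longrightarrow> dist (\<mu> q) r < 1"
      unfolding eventually_at_right_field by blast
    define d2 where "d2 = b2 - p"
    have d2: "d2 > 0" "\<forall>q. p < q \<and> q < p + d2 \<longrightarrow> dist (\<mu> q) r < 1"
      using b2 by (auto simp: d2_def)
    show ?thesis
    proof (rule exI[of _ "min d1 d2"], intro conjI exI[of _ "max (\<bar>\<mu> p\<bar>) (max (\<bar>l\<bar> + 1) (\<bar>r\<bar> + 1))"] ballI impI)
      show "min d1 d2 > 0" using d1 d2 by simp
      fix q assume q: "q \<in> {ts..b}" "\<bar>q - p\<bar> < min d1 d2"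
      consider "q < p" | "q = p" | "q > p" by linarith
      then show "\<bar>\<mu> q\<bar> \<le> max (\<bar>\<mu> p\<bar>) (max (\<bar>l\<bar> + 1) (\<bar>r\<bar> + 1))"
      proof cases
        case 1
        then have "dist (\<mu> q) l < 1" using d1 q by auto
        then show ?thesis by (simp add: dist_real_def)
      next
        case 2 then show ?thesis by simp
      next
        case 3
        then have "dist (\<mu> q) r < 1" using d2 q by auto
        then show ?thesis by (simp add: dist_real_def)
      qed
    qed
  qed
qed

lemma pc_S:
  assumes "piecewise_continuous_on_J ts \<mu>"
  obtains S where "finite S" "continuous_on ({ts..b} - S) \<mu>"
    "\<forall>s\<in>S. (\<exists>l. (\<mu> \<longlongrightarrow> l) (at_left s)) \<and> (\<exists>r. (\<mu> \<longlongrightarrow> r) (at_right s))"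
  using assms unfolding piecewise_continuous_on_J_def by blast

lemma pc_bound:
  assumes "piecewise_continuous_on_J ts \<mu>"
  shows "\<exists>B. \<forall>q\<in>{ts..b}. \<bar>\<mu> q\<bar> \<le> B"
proof -
  obtain S where S: "finite S" "continuous_on ({ts..b} - S) \<mu>"
    "\<forall>s\<in>S. (\<exists>l. (\<mu> \<longlongrightarrow> l) (at_left s)) \<and> (\<exists>r. (\<mu> \<longlongrightarrow> r) (at_right s))"
    using pc_S[OF assms] by blast
  have "\<forall>p\<in>{ts..b}. \<exists>d>0. \<exists>B. \<forall>q\<in>{ts..b}. \<bar>q - p\<bar> < d \<longrightarrow> \<bar>\<mu> q\<bar> \<le> B"
    using pc_local_bound[OF S] by blast
  then obtain D BB where DB: "\<And>p. p \<in> {ts..b} \<Longrightarrow> D p > 0 \<and> (\<forall>q\<in>{ts..b}. \<bar>q - p\<bar> < D p \<longrightarrow> \<bar>\<mu> q\<bar> \<le> BB p)"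
    by metis
  have "compact {ts..b}" by simp
  moreover have "\<And>p. p \<in> {ts..b} \<Longrightarrow> open (ball p (D p))" by simp
  moreover have "{ts..b} \<subseteq> \<Union> ((\<lambda>p. ball p (D p)) ` {ts..b})"
    using DB by force
  ultimately obtain C' where C': "C' \<subseteq> {ts..b}" "finite C'" "{ts..b} \<subseteq> \<Union> ((\<lambda>p. ball p (D p)) ` C')"
    by (rule compactE_image)
  show ?thesis
  proof (rule exI[of _ "\<Sum>p\<in>C'. \<bar>BB p\<bar>"], intro ballI)
    fix q assume q: "q \<in> {ts..b}"
    then obtain p where p: "p \<in> C'" "q \<in> ball p (D p)" using C' by blast
    then have "\<bar>\<mu> q\<bar> \<le> BB p" using DB[of p] C' q by (auto simp: dist_real_def abs_minus_commute)
    also have "\<dots> \<le> \<bar>BB p\<bar>" by simp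
    also have "\<dots> \<le> (\<Sum>p\<in>C'. \<bar>BB p\<bar>)"
      by (rule member_le_sum) (use p C' in auto)
    finally show "\<bar>\<mu> q\<bar> \<le> (\<Sum>p\<in>C'. \<bar>BB p\<bar>)" .
  qed
qed

lemma pc_integrable:
  assumes "piecewise_continuous_on_J ts \<mu>" "ts \<le> c"
  shows "\<mu> integrable_on {c..d}"
proof -
  obtain S where S: "finite S" "continuous_on ({ts..d} - S) \<mu>"
    using pc_S[OF assms(1)] by metis
  obtain B where B: "\<forall>q\<in>{ts..d}. \<bar>\<mu> q\<bar> \<le> B" using pc_bound[OF assms(1)] by blast
  have c1: "continuous_on ({c..d} - S) \<mu>"
    by (rule continuous_on_subset[OF S(2)]) (use assms in auto)
  have lm: "{c..d} - S \<in> lmeasurable"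
    by (intro fmeasurable_Diff) (auto intro: negligible_imp_sets negligible_finite S(1))
  have m: "\<mu> \<in> borel_measurable (lebesgue_on ({c..d} - S))"
    by (rule continuous_imp_measurable_on_sets_lebesgue[OF c1])
       (intro sets.Diff, auto intro: negligible_imp_sets negligible_finite S(1))
  have "\<mu> integrable_on ({c..d} - S)"
    by (rule measurable_bounded_by_integrable_imp_integrable_real[OF m, of "\<lambda>_. B"])
       (use B assms lm in \<open>auto intro!: integrable_on_const\<close>)
  then show ?thesis
    by (rule integrable_spike_set) (auto intro: negligible_subset[OF negligible_finite[OF S(1)]])
qed

definition kinv :: "(real \<Rightarrow> real) \<Rightarrow> real \<Rightarrow> real" where
  "kinv a y = inv_into {0..} a y"

lemma Kinf_mono_strict: "classKinf a \<Longrightarrow> 0 \<le> s \<Longrightarrow> s < s' \<Longrightarrow> a s < a s'"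
  unfolding classKinf_def strict_mono_on_def by auto

lemma Kinf_mono: "classKinf a \<Longrightarrow> 0 \<le> s \<Longrightarrow> s \<le> s' \<Longrightarrow> a s \<le> a s'"
  using Kinf_mono_strict[of a s s'] by (cases "s = s'") auto

lemma Kinf_nonneg: "classKinf a \<Longrightarrow> 0 \<le> s \<Longrightarrow> 0 \<le> a s"
  using Kinf_mono[of a 0 s] unfolding classKinf_def by auto

lemma Kinf_surj:
  assumes K: "classKinf a" and y: "0 \<le> y"
  shows "\<exists>s\<ge>0. a s = y"
proof -
  obtain s where s: "s \<ge> 0" "a s > y" using K unfolding classKinf_def by blast
  have "continuous_on {0..s} a" using K unfolding classKinf_def
    by (auto intro: continuous_on_subset)
  then obtain x where "x \<ge> 0" "x \<le> s" "a x = y"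
    using IVT'[of a 0 y s] y s K unfolding classKinf_def by auto
  then show ?thesis by blast
qed

lemma Kinf_inj: "classKinf a \<Longrightarrow> inj_on a {0..}"
  unfolding classKinf_def by (auto intro: strict_mono_on_imp_inj_on)

lemma kinv_props:
  assumes K: "classKinf a" and y: "0 \<le> y"
  shows "kinv a y \<ge> 0" "a (kinv a y) = y"
proof -
  have "y \<in> a ` {0..}" using Kinf_surj[OF K y] by auto
  then show "kinv a y \<ge> 0" "a (kinv a y) = y"
    unfolding kinv_def using inv_into_into[of y a "{0..}"] by (auto intro: f_inv_into_f)
qed

lemma kinv_f:
  assumes K: "classKinf a" and s: "0 \<le> s"
  shows "kinv a (a s) = s"
  unfolding kinv_def using Kinf_inj[OF K] s by (auto intro: inv_into_f_f)

lemma kinv_0: "classKinf a \<Longrightarrow> kinv a 0 = 0"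
  using kinv_f[of a 0] unfolding classKinf_def by auto

lemma kinv_less:
  assumes K: "classKinf a" and y: "0 \<le> y" and s: "0 \<le> s" and "y < a s"
  shows "kinv a y < s"
proof (rule ccontr)
  assume "\<not> kinv a y < s"
  then have "a s \<le> a (kinv a y)" using Kinf_mono[OF K s] by auto
  then show False using kinv_props[OF K y] \<open>y < a s\<close> by auto
qed

lemma kinv_greater:
  assumes K: "classKinf a" and y: "0 \<le> y" and s: "0 \<le> s" and "a s < y"
  shows "s < kinv a y"
proof (rule ccontr)
  assume "\<not> s < kinv a y"
  then have "a (kinv a y) \<le> a s" using Kinf_mono[OF K, of "kinv a y" s] kinv_props[OF K y] by auto
  then show False using kinv_props[OF K y] \<open>a s < y\<close> by auto
qed

lemma kinv_mono:
  assumes K: "classKinf a" and y: "0 \<le> y" "y \<le> y'"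
  shows "kinv a y \<le> kinv a y'"
proof (rule ccontr)
  assume "\<not> kinv a y \<le> kinv a y'"
  then have "a (kinv a y') < a (kinv a y)"
    using Kinf_mono_strict[OF K, of "kinv a y'" "kinv a y"] kinv_props[OF K] y by auto
  then show False using kinv_props[OF K] y by auto
qed

lemma kinv_le:
  assumes K: "classKinf a" and s: "0 \<le> s" and "a s \<le> y"
  shows "s \<le> kinv a y"
  using kinv_mono[OF K Kinf_nonneg[OF K s] \<open>a s \<le> y\<close>] kinv_f[OF K s] by simp

lemma kinv_cont:
  assumes K: "classKinf a"
  shows "continuous_on {0..} (kinv a)"
  unfolding continuous_on_iff
proof (intro ballI allI impI)
  fix y0 e :: real assume y0: "y0 \<in> {0..}" and e: "e > 0"
  define x0 where "x0 = kinv a y0"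
  have x0: "x0 \<ge> 0" "a x0 = y0" using kinv_props[OF K] y0 by (auto simp: x0_def)
  define du where "du = a (x0 + e) - y0"
  have du: "du > 0" using Kinf_mono_strict[OF K x0(1), of "x0 + e"] x0 e by (auto simp: du_def)
  define dl where "dl = (if x0 - e < 0 then 1 else y0 - a (x0 - e))"
  have dl: "dl > 0"
    using Kinf_mono_strict[OF K, of "x0 - e" x0] x0 e by (auto simp: dl_def)
  show "\<exists>d>0. \<forall>y\<in>{0..}. dist y y0 < d \<longrightarrow> dist (kinv a y) (kinv a y0) < e"
  proof (rule exI[of _ "min du dl"], intro conjI ballI impI)
    show "min du dl > 0" using du dl by simp
    fix y assume y: "y \<in> {0..}" "dist y y0 < min du dl"
    have "kinv a y < x0 + e"
      by (rule kinv_less[OF K]) (use y x0 e in \<open>auto simp: du_def dist_real_def\<close>)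
    moreover have "x0 - e < kinv a y"
    proof (cases "x0 - e < 0")
      case True then show ?thesis using kinv_props[OF K] y by force
    next
      case False
      then show ?thesis
        by (intro kinv_greater[OF K]) (use y x0 in \<open>auto simp: dl_def dist_real_def\<close>)
    qed
    ultimately show "dist (kinv a y) (kinv a y0) < e"
      by (simp add: x0_def[symmetric] dist_real_def abs_less_iff)
  qed
qed

lemma dini_noninc:
  fixes Z :: "real \<Rightarrow> real"
  assumes st: "s \<le> t" and Zc: "continuous_on {s..t} Z"
    and loc: "\<And>r e. r \<in> {s..<t} \<Longrightarrow> e > 0 \<Longrightarrow>
       \<exists>d>0. \<forall>r'. r < r' \<and> r' < r + d \<and> r' \<le> t \<longrightarrow> Z r' - Z r \<le> e * (r' - r)"
  shows "Z t \<le> Z s"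
proof -
  have main: "Z t \<le> Z s + e * (t - s)" if e: "e > 0" for e
  proof -
    define A where "A = {s..t} \<inter> (\<lambda>r. Z r - e * (r - s)) -` {..Z s}"
    have cA: "closed A" unfolding A_def
      by (intro continuous_closed_preimage) (auto intro!: continuous_intros Zc)
    have sA: "s \<in> A" using st by (auto simp: A_def)
    have bA: "bdd_above A" by (auto simp: A_def bdd_above_def)
    define c where "c = Sup A"
    have cA': "c \<in> A" unfolding c_def using closed_contains_Sup[OF _ bA cA] sA by blast
    have ct: "c \<le> t" using cA' by (auto simp: A_def)
    have "c = t"
    proof (rule ccontr)
      assume "c \<noteq> t"
      then have c: "c \<in> {s..<t}" using cA' ct by (auto simp: A_def)
      obtain d where d: "d > 0" "\<forall>r'. c < r' \<and> r' < c + d \<and> r' \<le> t \<longrightarrow> Z r' - Z c \<le> e * (r' - c)"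
        using loc[OF c e] by blast
      define r' where "r' = min (c + d/2) t"
      have r': "c < r'" "r' < c + d" "r' \<le> t" using d c by (auto simp: r'_def)
      then have "Z r' - Z c \<le> e * (r' - c)" using d by blast
      moreover have "Z c \<le> Z s + e * (c - s)" using cA' by (auto simp: A_def)
      ultimately have "r' \<in> A" using r' c by (auto simp: A_def algebra_simps)
      then have "r' \<le> c" unfolding c_def using bA by (rule cSup_upper)
      then show False using r' by simp
    qed
    then show ?thesis using cA' by (auto simp: A_def)
  qed
  show ?thesis
  proof (rule ccontr)
    assume H: "\<not> Z t \<le> Z s"
    then have "t > s" using st by (cases "t = s") auto
    define e where "e = (Z t - Z s) / (2 * (t - s))"
    have "e > 0" using H \<open>t > s\<close> by (auto simp: e_def)
    have "e * (t - s) = (Z t - Z s) / 2" using \<open>t > s\<close> by (simp add: e_def field_simps)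
    with main[OF \<open>e > 0\<close>] have "Z t \<le> Z s + (Z t - Z s) / 2" by simp
    then show False using H by (simp add: field_simps)
  qed
qed

lemma gronwall_V:
  fixes V :: "real \<times> 'a::euclidean_space \<Rightarrow> real"
    and V' :: "real \<times> 'a \<Rightarrow> (real \<times> 'a) \<Rightarrow>\<^sub>L real"
    and x g :: "real \<Rightarrow> 'a" and \<mu> :: "real \<Rightarrow> real"
  assumes V_deriv: "\<And>p. p \<in> {ts..} \<times> UNIV \<Longrightarrow>
                    (V has_derivative blinfun_apply (V' p)) (at p within {ts..} \<times> UNIV)"
    and V'_cont: "continuous_on ({ts..} \<times> UNIV) V'"
    and Vnn: "\<And>q. q \<in> {s..t} \<Longrightarrow> V (q, x q) \<ge> 0"
    and st: "ts \<le> s" "s \<le> t"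
    and xint: "\<And>r. r \<in> {s..t} \<Longrightarrow> (g has_integral (x r - x s)) {s..r}"
    and gb: "\<And>q. q \<in> {s..t} \<Longrightarrow> norm (g q) \<le> G"
    and dec: "\<And>q. q \<in> {s..t} \<Longrightarrow> V' (q, x q) (1, g q) \<le> \<mu> q * V (q, x q)"
    and \<mu>int: "\<mu> integrable_on {s..t}"
    and \<mu>b: "\<And>q. q \<in> {s..t} \<Longrightarrow> \<bar>\<mu> q\<bar> \<le> B"
  shows "V (t, x t) \<le> V (s, x s) * exp (integral {s..t} \<mu>)"
proof -
  have G0: "G \<ge> 0" using gb[of s] st by (auto intro: order_trans[OF norm_ge_zero])
  have B0: "B \<ge> 0" using \<mu>b[of s] st by auto
  have gint: "g integrable_on {s..t}" using xint[of t] st by auto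
  have xdiff: "(g has_integral (x r' - x r)) {r..r'}" if "s \<le> r" "r \<le> r'" "r' \<le> t" for r r'
  proof -
    have i1: "g integrable_on {s..r'}" using integrable_subinterval_real[OF gint] that by auto
    have i2: "g integrable_on {r..r'}" using integrable_subinterval_real[OF gint] that by auto
    have "integral {s..r} g + integral {r..r'} g = integral {s..r'} g"
      by (rule Henstock_Kurzweil_Integration.integral_combine) (use that i1 in auto)
    moreover have "integral {s..r} g = x r - x s" using xint[of r] that by (auto intro: integral_unique)
    moreover have "integral {s..r'} g = x r' - x s" using xint[of r'] that by (auto intro: integral_unique)
    ultimately have "integral {r..r'} g = x r' - x r" by (simp add: algebra_simps)
    then show ?thesis using i2 by (metis integrable_integral)
  qed
  have xlip: "norm (x r' - x r) \<le> G * (r' - r)" if "s \<le> r" "r \<le> r'" "r' \<le> t" for r r'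
  proof -
    have "norm (x r' - x r) \<le> G * Henstock_Kurzweil_Integration.content (cbox r r')"
      by (rule has_integral_bound[OF G0]) (use xdiff[OF that] gb that in auto)
    then show ?thesis using that by simp
  qed
  have xcont: "continuous_on {s..t} x"
    unfolding continuous_on_iff
  proof (intro ballI allI impI)
    fix r e :: real assume r: "r \<in> {s..t}" and e: "e > 0"
    show "\<exists>d>0. \<forall>r'\<in>{s..t}. dist r' r < d \<longrightarrow> dist (x r') (x r) < e"
    proof (rule exI[of _ "e / (G + 1)"], intro conjI ballI impI)
      show "e / (G + 1) > 0" using e G0 by simp
      fix r' assume r': "r' \<in> {s..t}" "dist r' r < e / (G + 1)"
      have "dist (x r') (x r) \<le> G * \<bar>r' - r\<bar>"
      proof (cases "r \<le> r'")
        case True then show ?thesis using xlip[of r r'] r r' by (simp add: dist_norm)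
      next
        case False then show ?thesis using xlip[of r' r] r r' by (simp add: dist_norm norm_minus_commute)
      qed
      also have "\<dots> \<le> G * (e / (G + 1))" using r' G0 by (intro mult_left_mono) (auto simp: dist_real_def)
      also have "\<dots> < e" using e G0 by (simp add: field_simps)
      finally show "dist (x r') (x r) < e" .
    qed
  qed
  have pcont: "continuous_on {s..t} (\<lambda>q. (q, x q))"
    by (intro continuous_intros xcont)
  have pD: "(\<lambda>q. (q, x q)) ` {s..t} \<subseteq> {ts..} \<times> UNIV" using st by auto
  have Vcont: "continuous_on ({ts..} \<times> UNIV) V"
    by (rule has_derivative_continuous_on) (rule V_deriv)
  define W where "W q = V (q, x q)" for q
  have Wcont: "continuous_on {s..t} W"
    unfolding W_def by (rule continuous_on_compose2[OF Vcont pcont pD])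
  have V'c: "continuous_on {s..t} (\<lambda>q. V' (q, x q))"
    by (rule continuous_on_compose2[OF V'_cont pcont pD])
  define M where "M r = integral {s..r} \<mu>" for r
  have Mdiff: "(\<mu> has_integral (M r' - M r)) {r..r'}" if "s \<le> r" "r \<le> r'" "r' \<le> t" for r r'
  proof -
    have i1: "\<mu> integrable_on {s..r'}" using integrable_subinterval_real[OF \<mu>int] that by auto
    have i2: "\<mu> integrable_on {r..r'}" using integrable_subinterval_real[OF \<mu>int] that by auto
    have "integral {s..r} \<mu> + integral {r..r'} \<mu> = integral {s..r'} \<mu>"
      by (rule Henstock_Kurzweil_Integration.integral_combine) (use that i1 in auto)
    then have "integral {r..r'} \<mu> = M r' - M r" by (simp add: M_def)
    then show ?thesis using i2 by (metis integrable_integral)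
  qed
  have Mb: "\<bar>M r\<bar> \<le> B * (t - s)" if "r \<in> {s..t}" for r
  proof -
    have "norm (M r - M s) \<le> B * Henstock_Kurzweil_Integration.content (cbox s r)"
      by (rule has_integral_bound[OF B0]) (use Mdiff[of s r] \<mu>b that in auto)
    moreover have "M s = 0" by (simp add: M_def)
    ultimately have "\<bar>M r\<bar> \<le> B * (r - s)" using that by simp
    also have "\<dots> \<le> B * (t - s)" using that B0 by (intro mult_left_mono) auto
    finally show ?thesis .
  qed
  have Mcont: "continuous_on {s..t} M"
    unfolding M_def by (rule indefinite_integral_continuous_1[OF \<mu>int])
  have loc: "\<exists>d>0. \<forall>r'. r < r' \<and> r' < r + d \<and> r' \<le> t \<longrightarrow> W r' - W r \<le> W r * (M r' - M r) + \<epsilon> * (r' - r)"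
    if r: "r \<in> {s..<t}" and \<epsilon>: "\<epsilon> > 0" for r \<epsilon>
  proof -
    define p where "p = (r, x r)"
    define L where "L = V' p"
    define \<epsilon>1 where "\<epsilon>1 = \<epsilon> / (3 * (1 + G))"
    have \<epsilon>1: "\<epsilon>1 > 0" using \<epsilon> G0 by (simp add: \<epsilon>1_def)
    have pD1: "p \<in> {ts..} \<times> UNIV" using r st by (auto simp: p_def)
    obtain d1 where d1: "d1 > 0" "\<forall>y\<in>{ts..} \<times> UNIV. norm (y - p) < d1 \<longrightarrow>
        norm (V y - V p - L (y - p)) \<le> \<epsilon>1 * norm (y - p)"
      using V_deriv[OF pD1] \<epsilon>1 unfolding has_derivative_within_alt L_def by blast
    have rr: "r \<in> {s..t}" using r by auto
    obtain d2 where d2: "d2 > 0" "\<forall>q\<in>{s..t}. dist q r < d2 \<longrightarrow> dist (V' (q, x q)) L < \<epsilon>1"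
      using V'c rr \<epsilon>1 unfolding continuous_on_iff L_def p_def by blast
    have e3: "\<epsilon> / (3 * (B + 1)) > 0" using \<epsilon> B0 by simp
    obtain d3 where d3: "d3 > 0" "\<forall>q\<in>{s..t}. dist q r < d3 \<longrightarrow> dist (W q) (W r) < \<epsilon> / (3 * (B + 1))"
      using Wcont rr e3 unfolding continuous_on_iff by blast
    show ?thesis
    proof (rule exI[of _ "min (d1 / (1 + G)) (min d2 d3)"], intro conjI allI impI)
      show "min (d1 / (1 + G)) (min d2 d3) > 0" using d1 d2 d3 G0 by simp
      fix r' assume r': "r < r' \<and> r' < r + min (d1 / (1 + G)) (min d2 d3) \<and> r' \<le> t"
      define h where "h = r' - r"
      have h: "h > 0" using r' by (simp add: h_def)
      have "h < d1 / (1 + G)" using r' min.cobounded1[of "d1 / (1 + G)" "min d2 d3"] unfolding h_def by linarith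
      then have hd1: "(1 + G) * h < d1" using G0 by (simp add: field_simps)
      have yp: "(r', x r') - p = (h, x r' - x r)" by (simp add: p_def h_def)
      have ny: "norm ((r', x r') - p) \<le> (1 + G) * h"
      proof -
        have "norm ((r', x r') - p) \<le> norm h + norm (x r' - x r)" unfolding yp by (rule norm_Pair_le)
        also have "\<dots> \<le> h + G * h" using xlip[of r r'] r r' h by (simp add: h_def)
        finally show ?thesis by (simp add: algebra_simps)
      qed
      have E1: "W r' - W r \<le> L ((r', x r') - p) + \<epsilon>1 * ((1 + G) * h)"
      proof -
        have "norm (V (r', x r') - V p - L ((r', x r') - p)) \<le> \<epsilon>1 * norm ((r', x r') - p)"
          using d1(2) ny hd1 r' st rr by auto
        also have "\<dots> \<le> \<epsilon>1 * ((1 + G) * h)" using ny \<epsilon>1 by (intro mult_left_mono) auto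
        finally show ?thesis by (simp add: W_def p_def abs_le_iff)
      qed
      define c2 where "c2 = \<epsilon>1 * (1 + G) + \<epsilon> / 3"
      have bl: "bounded_linear (\<lambda>v. L (0, v))"
        by (rule bounded_linear_compose[OF blinfun.bounded_linear_right])
           (intro bounded_linear_Pair bounded_linear_zero bounded_linear_ident)
      have Ieq: "L (h, x r' - x r) = h * L (1, 0) + L (0, x r' - x r)"
      proof -
        have "(h, x r' - x r) = h *\<^sub>R (1, 0) + (0, x r' - x r)" by simp
        then show ?thesis by (metis blinfun.add_right blinfun.scaleR_right real_scaleR_def)
      qed
      have I1: "((\<lambda>q. L (1, 0) + L (0, g q)) has_integral (h * L (1, 0) + L (0, x r' - x r))) {r..r'}"
      proof (rule has_integral_add)
        show "((\<lambda>q. L (1, 0)) has_integral h * L (1, 0)) {r..r'}"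
          using has_integral_const_real[of "L (1, 0)" r r'] r' by (simp add: h_def)
        show "((\<lambda>q. L (0, g q)) has_integral L (0, x r' - x r)) {r..r'}"
          using has_integral_linear[OF xdiff[of r r'] bl] r r' by (simp add: o_def)
      qed
      have I2: "((\<lambda>q. \<mu> q * W r + c2) has_integral ((M r' - M r) * W r + h * c2)) {r..r'}"
      proof (rule has_integral_add)
        show "((\<lambda>q. \<mu> q * W r) has_integral (M r' - M r) * W r) {r..r'}"
          by (rule has_integral_mult_left[OF Mdiff]) (use r r' in auto)
        show "((\<lambda>q. c2) has_integral h * c2) {r..r'}"
          using has_integral_const_real[of c2 r r'] r' by (simp add: h_def)
      qed
      have pw: "L (1, 0) + L (0, g q) \<le> \<mu> q * W r + c2" if q: "q \<in> {r..r'}" for q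
      proof -
        have qst: "q \<in> {s..t}" using q rr r' by auto
        have dq: "dist q r < d2" "dist q r < d3" using q r' min.cobounded2[of "d1 / (1 + G)" "min d2 d3"]
          by (auto simp: dist_real_def)
        have "L (1, 0) + L (0, g q) = L ((1, 0) + (0, g q))" by (simp only: blinfun.add_right)
        also have "\<dots> = L (1, g q)" by simp
        also have "\<dots> = V' (q, x q) (1, g q) + (L - V' (q, x q)) (1, g q)" by (simp add: blinfun.diff_left)
        also have "\<dots> \<le> V' (q, x q) (1, g q) + \<epsilon>1 * (1 + G)"
        proof -
          have "(L - V' (q, x q)) (1, g q) \<le> norm (L - V' (q, x q)) * norm (1::real, g q)"
            using norm_blinfun[of "L - V' (q, x q)" "(1, g q)"] by simp
          also have "\<dots> \<le> \<epsilon>1 * (1 + G)"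
          proof (rule mult_mono)
            show "norm (L - V' (q, x q)) \<le> \<epsilon>1" using d2(2) qst dq by (auto simp: dist_norm norm_minus_commute)
            show "norm (1::real, g q) \<le> 1 + G" using norm_Pair_le[of "1::real" "g q"] gb[OF qst] by simp
          qed (use \<epsilon>1 in auto)
          finally show ?thesis by simp
        qed
        also have "V' (q, x q) (1, g q) \<le> \<mu> q * W q" using dec[OF qst] by (simp add: W_def)
        also have "\<mu> q * W q = \<mu> q * W r + \<mu> q * (W q - W r)" by (simp add: algebra_simps)
        also have "\<mu> q * (W q - W r) \<le> \<epsilon> / 3"
        proof -
          have "\<mu> q * (W q - W r) \<le> \<bar>\<mu> q\<bar> * \<bar>W q - W r\<bar>" by (simp add: abs_mult[symmetric])
          also have "\<dots> \<le> B * (\<epsilon> / (3 * (B + 1)))"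
            using d3(2) qst dq \<mu>b[OF qst] by (intro mult_mono) (auto simp: dist_real_def)
          also have "\<dots> \<le> \<epsilon> / 3" using B0 \<epsilon> by (simp add: field_simps)
          finally show ?thesis .
        qed
        finally show ?thesis by (simp add: c2_def)
      qed
      have "h * L (1, 0) + L (0, x r' - x r) \<le> (M r' - M r) * W r + h * c2"
        by (rule has_integral_le[OF I1 I2 pw])
      then have "L ((r', x r') - p) \<le> (M r' - M r) * W r + h * c2" using Ieq yp by simp
      with E1 have L1: "W r' - W r \<le> (M r' - M r) * W r + (h * c2 + \<epsilon>1 * ((1 + G) * h))" by simp
      have L2: "h * c2 + \<epsilon>1 * ((1 + G) * h) = \<epsilon> * h"
      proof -
        have e1: "\<epsilon>1 * (1 + G) = \<epsilon> / 3" using G0 by (simp add: \<epsilon>1_def field_simps)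
        have "h * c2 + \<epsilon>1 * ((1 + G) * h) = h * (\<epsilon>1 * (1 + G)) * 2 + h * (\<epsilon> / 3)"
          by (simp add: c2_def algebra_simps)
        then show ?thesis unfolding e1 by simp
      qed
      from L1 L2 show "W r' - W r \<le> W r * (M r' - M r) + \<epsilon> * (r' - r)"
        by (simp add: h_def algebra_simps)
    qed
  qed
  define Z where "Z r = W r * exp (- M r)" for r
  have Zc: "continuous_on {s..t} Z" unfolding Z_def
    by (intro continuous_intros Wcont Mcont)
  have "Z t \<le> Z s"
  proof (rule dini_noninc[OF st(2) Zc])
    fix r e :: real assume r: "r \<in> {s..<t}" and e: "e > 0"
    define K where "K = exp (B * (t - s))"
    have K: "K > 0" by (simp add: K_def)
    obtain d where d: "d > 0" "\<forall>r'. r < r' \<and> r' < r + d \<and> r' \<le> t \<longrightarrow>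
        W r' - W r \<le> W r * (M r' - M r) + (e / K) * (r' - r)"
      using loc[OF r, of "e / K"] e K by auto
    show "\<exists>d>0. \<forall>r'. r < r' \<and> r' < r + d \<and> r' \<le> t \<longrightarrow> Z r' - Z r \<le> e * (r' - r)"
    proof (rule exI[of _ d], intro conjI allI impI)
      show "d > 0" by (rule d(1))
      fix r' assume r': "r < r' \<and> r' < r + d \<and> r' \<le> t"
      have rst: "r \<in> {s..t}" "r' \<in> {s..t}" using r r' by auto
      define D where "D = M r' - M r"
      have Wr: "W r \<ge> 0" using Vnn[OF rst(1)] by (simp add: W_def)
      have "W r' - W r \<le> W r * (M r' - M r) + (e / K) * (r' - r)"
        using d(2) r' by blast
      then have A: "W r' \<le> W r * (1 + D) + (e / K) * (r' - r)"
        by (simp add: D_def algebra_simps)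
      have ex: "exp (- M r') = exp (- M r) * exp (- D)"
        by (simp add: D_def exp_add[symmetric])
      have B1: "(1 + D) * exp (- D) \<le> 1"
      proof -
        have "(1 + D) * exp (- D) \<le> exp D * exp (- D)"
          by (rule mult_right_mono[OF exp_ge_add_one_self]) simp
        also have "\<dots> = 1" by (simp add: exp_add[symmetric])
        finally show ?thesis .
      qed
      have eK: "exp (- M r') \<le> K"
        unfolding K_def using Mb[OF rst(2)] by simp
      have "Z r' = exp (- M r') * W r'" by (simp add: Z_def)
      also have "\<dots> \<le> exp (- M r') * (W r * (1 + D) + (e / K) * (r' - r))"
        by (rule mult_left_mono[OF A]) simp
      also have "\<dots> = exp (- M r) * W r * ((1 + D) * exp (- D)) + exp (- M r') * ((e / K) * (r' - r))"
        unfolding ex by (simp add: algebra_simps)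
      also have "\<dots> \<le> exp (- M r) * W r * 1 + K * ((e / K) * (r' - r))"
      proof (rule add_mono)
        show "exp (- M r) * W r * ((1 + D) * exp (- D)) \<le> exp (- M r) * W r * 1"
          by (rule mult_left_mono[OF B1]) (use Wr in simp)
        show "exp (- M r') * (e / K * (r' - r)) \<le> K * (e / K * (r' - r))"
          by (rule mult_right_mono[OF eK]) (use e K r' in simp)
      qed
      also have "\<dots> = Z r + e * (r' - r)" using K by (simp add: Z_def)
      finally show "Z r' - Z r \<le> e * (r' - r)" by simp
    qed
  qed
  moreover have "M s = 0" by (simp add: M_def)
  ultimately have "W t * exp (- M t) \<le> W s" by (simp add: Z_def)
  then have "W t * exp (- M t) * exp (M t) \<le> W s * exp (M t)"
    by (rule mult_right_mono) simp
  then show ?thesis by (simp add: W_def M_def mult.assoc exp_add[symmetric])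
qed

lemma int_shift:
  fixes g x :: "real \<Rightarrow> 'a::euclidean_space"
  assumes xint: "\<And>r. r \<in> {a..b} \<Longrightarrow> (g has_integral (x r - x a)) {a..r}"
    and "a \<le> s" "s \<le> r" "r \<le> b"
  shows "(g has_integral (x r - x s)) {s..r}"
proof -
  have "a \<le> b" using assms by linarith
  then have gint: "g integrable_on {a..b}" using xint[of b] by auto
  have i1: "g integrable_on {a..r}" using integrable_subinterval_real[OF gint] assms by auto
  have i2: "g integrable_on {s..r}" using integrable_subinterval_real[OF gint] assms by auto
  have "integral {a..s} g + integral {s..r} g = integral {a..r} g"
    by (rule Henstock_Kurzweil_Integration.integral_combine) (use assms i1 in auto)
  moreover have "integral {a..s} g = x s - x a" using xint[of s] assms by (auto intro: integral_unique)
  moreover have "integral {a..r} g = x r - x a" using xint[of r] assms by (auto intro: integral_unique)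
  ultimately have "integral {s..r} g = x r - x s" by (simp add: algebra_simps)
  then show ?thesis using i2 by (metis integrable_integral)
qed

lemma last_crossing:
  fixes W :: "real \<Rightarrow> real"
  assumes ab: "a \<le> b" and Wc: "continuous_on {a..b} W" and Wb: "W b > c"
    and q0: "q0 \<in> {a..b}" "W q0 \<le> c"
  shows "\<exists>s\<in>{a..<b}. W s = c \<and> (\<forall>q\<in>{s<..b}. W q > c)"
proof -
  define A where "A = {a..b} \<inter> W -` {..c}"
  have cA: "closed A" unfolding A_def by (intro continuous_closed_preimage Wc) auto
  have nA: "A \<noteq> {}" using q0 by (auto simp: A_def)
  have bA: "bdd_above A" by (auto simp: A_def bdd_above_def)
  define s where "s = Sup A"
  have sA: "s \<in> A" unfolding s_def by (rule closed_contains_Sup[OF nA bA cA])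
  have s1: "s \<in> {a..b}" "W s \<le> c" using sA by (auto simp: A_def)
  have sb: "s < b" using s1 Wb by (cases "s = b") auto
  have above: "\<forall>q\<in>{s<..b}. W q > c"
  proof
    fix q assume q: "q \<in> {s<..b}"
    show "W q > c"
    proof (rule ccontr)
      assume "\<not> W q > c"
      then have "q \<in> A" using q s1 by (auto simp: A_def)
      then have "q \<le> s" unfolding s_def using bA by (rule cSup_upper)
      then show False using q by simp
    qed
  qed
  have "continuous_on {s..b} W" by (rule continuous_on_subset[OF Wc]) (use s1 in auto)
  then obtain q where q: "q \<ge> s" "q \<le> b" "W q = c"
    using IVT'[of W s c b] s1 Wb sb by auto
  then have "q = s" using above by (cases "q = s") auto
  then show ?thesis using q sb s1 above by auto
qed


lemma classK_gen:
  assumes K1: "classKinf \<alpha>1" and C: "C \<ge> 0" and hc: "continuous_on {0..} h"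
    and hm: "\<And>s s'. 0 \<le> s \<Longrightarrow> s \<le> s' \<Longrightarrow> h s \<le> h s'"
    and h0: "h 0 = 0" and hn: "\<And>s. s \<ge> 0 \<Longrightarrow> h s \<ge> 0"
  shows "classK (\<lambda>s. kinv \<alpha>1 (C * h s))"
  unfolding classK_def
proof (intro conjI allI impI)
  have kc: "continuous_on {0..} (kinv \<alpha>1)" by (rule kinv_cont[OF K1])
  have c2: "continuous_on {0..} (\<lambda>s. C * h s)" by (rule continuous_on_mult_left[OF hc])
  have im: "(\<lambda>s. C * h s) ` {0..} \<subseteq> {0..}"
  proof
    fix y assume "y \<in> (\<lambda>s. C * h s) ` {0..}"
    then obtain s where "s \<ge> 0" "y = C * h s" by auto
    then show "y \<in> {0..}" using C hn[of s] by simp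
  qed
  show "continuous_on {0..} (\<lambda>s. kinv \<alpha>1 (C * h s))"
    by (rule continuous_on_compose2[OF kc c2 im])
  show "mono_on {0..} (\<lambda>s. kinv \<alpha>1 (C * h s))"
  proof (rule mono_onI)
    fix r s :: real assume rs: "r \<in> {0..}" "s \<in> {0..}" "r \<le> s"
    have "0 \<le> C * h r" using C hn[of r] rs by simp
    moreover have "C * h r \<le> C * h s" using hm[of r s] rs C by (intro mult_left_mono) auto
    ultimately show "kinv \<alpha>1 (C * h r) \<le> kinv \<alpha>1 (C * h s)" by (rule kinv_mono[OF K1])
  qed
  show "kinv \<alpha>1 (C * h 0) = 0" using h0 kinv_0[OF K1] by simp
  fix s :: real assume "s \<ge> 0"
  then have "C * h s \<ge> 0" using C hn[of s] by simp
  then show "kinv \<alpha>1 (C * h s) \<ge> 0" by (rule kinv_props(1)[OF K1])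
qed
theorem theorem3:
  fixes ts :: real
    and f :: "real \<Rightarrow> real^'n \<Rightarrow> real^'m \<Rightarrow> real^'n"
    and V :: "(real \<times> (real^'n)) \<Rightarrow> real"
    and V' :: "(real \<times> (real^'n)) \<Rightarrow> (real \<times> (real^'n)) \<Rightarrow>\<^sub>L real"
    and \<alpha>1 \<alpha>2 \<rho> \<mu> :: "real \<Rightarrow> real"
  assumes f_cont: "continuous_on ({ts..} \<times> UNIV \<times> UNIV) (\<lambda>(t, x, u). f t x u)"
    and f_lip: "loc_lipschitz_x ts f"
    and f_zero: "\<And>t. ts \<le> t \<Longrightarrow> f t 0 0 = 0"
    and V_deriv: "\<And>p. p \<in> {ts..} \<times> UNIV \<Longrightarrow>
                    (V has_derivative blinfun_apply (V' p)) (at p within {ts..} \<times> UNIV)"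
    and V'_cont: "continuous_on ({ts..} \<times> UNIV) V'"
    and V_nonneg: "\<And>t x. ts \<le> t \<Longrightarrow> V (t, x) \<ge> 0"
    and K1: "classKinf \<alpha>1" and K2: "classKinf \<alpha>2" and Krho: "classK \<rho>"
    and mu_pc: "piecewise_continuous_on_J ts \<mu>"
    and mu_ues: "uniformly_exp_stable ts \<mu>"
    and sandwich: "\<And>t x. ts \<le> t \<Longrightarrow> \<alpha>1 (norm x) \<le> V (t, x) \<and> V (t, x) \<le> \<alpha>2 (norm x)"
    and decay: "\<And>t x u. ts \<le> t \<Longrightarrow> V (t, x) \<ge> \<rho> (norm u) \<Longrightarrow>
                  blinfun_apply (V' (t, x)) (1, f t x u) \<le> \<mu> t * V (t, x)"
  shows "\<exists>\<sigma> \<gamma>1. classKL \<sigma> \<and> classK \<gamma>1 \<and>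
     (\<forall>u t0 T (x :: real \<Rightarrow> real^'n).
        loc_ess_bounded ts u \<and> ts \<le> t0 \<and> t0 \<le> T \<and>
        (\<forall>t\<in>{t0..T}. ((\<lambda>s. f s (x s) (u s)) has_integral (x t - x t0)) {t0..t})
        \<longrightarrow> (\<forall>t\<in>{t0..T}. bdd_above ((\<lambda>s. norm (u s)) ` {t0..t}) \<longrightarrow>
               norm (x t) \<le> \<sigma> (norm (x t0)) (t - t0) + \<gamma>1 (SUP s\<in>{t0..t}. norm (u s))))"
proof -
  obtain a \<beta> where a: "a > 0" and \<beta>: "\<beta> \<ge> 0"
    and ues: "\<And>t0 t. ts \<le> t0 \<Longrightarrow> t0 \<le> t \<Longrightarrow> integral {t0..t} \<mu> \<le> - a * (t - t0) + \<beta>"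
    using mu_ues unfolding uniformly_exp_stable_def by blast
  define E where "E = exp \<beta>"
  have E1: "E \<ge> 1" using \<beta> by (simp add: E_def)
  define \<sigma> where "\<sigma> s \<tau> = kinv \<alpha>1 (E * exp (- a * \<tau>) * \<alpha>2 s)" for s \<tau>
  define \<gamma>1 where "\<gamma>1 r = kinv \<alpha>1 (E * \<rho> r)" for r
  have rho: "continuous_on {0..} \<rho>" "mono_on {0..} \<rho>" "\<rho> 0 = 0" "\<And>s. s \<ge> 0 \<Longrightarrow> \<rho> s \<ge> 0"
    using Krho unfolding classK_def by auto
  have a2c: "continuous_on {0..} \<alpha>2" using K2 unfolding classKinf_def by auto
  have a20: "\<alpha>2 0 = 0" using K2 unfolding classKinf_def by auto
  have kc: "continuous_on {0..} (kinv \<alpha>1)" by (rule kinv_cont[OF K1])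
  have K\<gamma>: "classK \<gamma>1"
    unfolding \<gamma>1_def
  proof (rule classK_gen[OF K1])
    show "0 \<le> E" using E1 by simp
    show "\<And>s s'. 0 \<le> s \<Longrightarrow> s \<le> s' \<Longrightarrow> \<rho> s \<le> \<rho> s'"
      using rho(2) unfolding mono_on_def by auto
  qed (use rho in auto)
  have KL: "classKL \<sigma>"
    unfolding classKL_def
  proof (intro conjI allI impI ballI)
    fix \<tau> :: real assume "\<tau> \<ge> 0"
    show "classK (\<lambda>s. \<sigma> s \<tau>)"
      unfolding \<sigma>_def
    proof (rule classK_gen[OF K1 _ a2c _ a20])
      show "0 \<le> E * exp (- a * \<tau>)" using E1 by simp
      show "\<And>s s'. 0 \<le> s \<Longrightarrow> s \<le> s' \<Longrightarrow> \<alpha>2 s \<le> \<alpha>2 s'" by (rule Kinf_mono[OF K2])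
      show "\<And>s. 0 \<le> s \<Longrightarrow> 0 \<le> \<alpha>2 s" by (rule Kinf_nonneg[OF K2])
    qed
  next
    fix s :: real assume s: "s \<ge> 0"
    have a2s: "\<alpha>2 s \<ge> 0" using Kinf_nonneg[OF K2 s] .
    show "antimono_on {0..} (\<sigma> s)"
      unfolding \<sigma>_def
    proof (rule monotone_onI, rule kinv_mono[OF K1])
      fix r r' :: real assume "r \<in> {0..}" "r' \<in> {0..}" "r \<le> r'"
      then show "E * exp (- a * r') * \<alpha>2 s \<le> E * exp (- a * r) * \<alpha>2 s"
        using a a2s E1 by (intro mult_right_mono mult_left_mono) auto
      show "0 \<le> E * exp (- a * r') * \<alpha>2 s" using a2s E1 by simp
    qed
    have "filterlim (\<lambda>\<tau>. a * \<tau>) at_top at_top"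
      using a by (intro filterlim_tendsto_pos_mult_at_top[OF tendsto_const]) (auto intro: filterlim_ident)
    then have "filterlim (\<lambda>\<tau>. - (a * \<tau>)) at_bot at_top"
      by (simp add: filterlim_uminus_at_top)
    then have "((\<lambda>\<tau>. exp (- a * \<tau>)) \<longlongrightarrow> 0) at_top" using exp_at_bot by (auto intro: filterlim_compose)
    then have lim: "((\<lambda>\<tau>. E * exp (- a * \<tau>) * \<alpha>2 s) \<longlongrightarrow> E * 0 * \<alpha>2 s) at_top"
      by (intro tendsto_mult tendsto_const)
    then have lim: "((\<lambda>\<tau>. E * exp (- a * \<tau>) * \<alpha>2 s) \<longlongrightarrow> 0) at_top" by simp
    have "((\<lambda>\<tau>. kinv \<alpha>1 (E * exp (- a * \<tau>) * \<alpha>2 s)) \<longlongrightarrow> kinv \<alpha>1 0) at_top"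
      by (rule continuous_on_tendsto_compose[OF kc lim]) (use a2s E1 in auto)
    then show "(\<sigma> s \<longlongrightarrow> 0) at_top" using kinv_0[OF K1] by (simp add: \<sigma>_def[abs_def])
  qed
  show ?thesis
  proof (intro exI[of _ \<sigma>] exI[of _ \<gamma>1] conjI KL K\<gamma> allI impI ballI)
    fix u t0 T and x :: "real \<Rightarrow> real^'n" and t
    assume H: "loc_ess_bounded ts u \<and> ts \<le> t0 \<and> t0 \<le> T \<and>
        (\<forall>t\<in>{t0..T}. ((\<lambda>s. f s (x s) (u s)) has_integral (x t - x t0)) {t0..t})"
      and t: "t \<in> {t0..T}" and bdd: "bdd_above ((\<lambda>s. norm (u s)) ` {t0..t})"
    have t0: "ts \<le> t0" "t0 \<le> t" using H t by auto
    define g where "g s = f s (x s) (u s)" for s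
    define \<nu> where "\<nu> = (SUP s\<in>{t0..t}. norm (u s))"
    have u\<nu>: "norm (u q) \<le> \<nu>" if "q \<in> {t0..t}" for q
      unfolding \<nu>_def by (rule cSUP_upper[OF that bdd])
    have \<nu>0: "\<nu> \<ge> 0" using u\<nu>[of t0] t0 by (auto intro: order_trans[OF norm_ge_zero])
    have xint: "(g has_integral (x r - x t0)) {t0..r}" if "r \<in> {t0..t}" for r
      using H t that unfolding g_def by auto
    have gint: "g integrable_on {t0..t}" using xint[of t] t0 by auto
    have xeq: "x r = x t0 + integral {t0..r} g" if "r \<in> {t0..t}" for r
      using integral_unique[OF xint[OF that]] by simp
    have xcont: "continuous_on {t0..t} x"
    proof -
      have "continuous_on {t0..t} (\<lambda>r. x t0 + integral {t0..r} g)"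
        by (intro continuous_intros indefinite_integral_continuous_1 gint)
      then show ?thesis by (rule continuous_on_eq) (rule sym, rule xeq)
    qed
    obtain X where X0: "\<forall>y\<in>x ` {t0..t}. norm y \<le> X"
      using compact_imp_bounded[OF compact_continuous_image[OF xcont compact_Icc]]
      unfolding bounded_iff by blast
    have X: "norm (x r) \<le> X" if "r \<in> {t0..t}" for r using X0 that by blast
    define Kset where "Kset = {t0..t} \<times> cball (0::real^'n) X \<times> cball (0::real^'m) \<nu>"
    have "compact Kset" unfolding Kset_def by (intro compact_Times compact_Icc compact_cball)
    moreover have "continuous_on Kset (\<lambda>(t, x, u). f t x u)"
      by (rule continuous_on_subset[OF f_cont]) (use t0 in \<open>auto simp: Kset_def\<close>)
    ultimately have "bounded ((\<lambda>(t, x, u). f t x u) ` Kset)"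
      by (intro compact_imp_bounded compact_continuous_image)
    then obtain G where G0: "\<forall>y\<in>(\<lambda>(t, x, u). f t x u) ` Kset. norm y \<le> G"
      unfolding bounded_iff by blast
    have gb: "norm (g q) \<le> G" if "q \<in> {t0..t}" for q
    proof -
      have "(q, x q, u q) \<in> Kset" using that X u\<nu> by (auto simp: Kset_def)
      then have "g q \<in> (\<lambda>(t, x, u). f t x u) ` Kset"
        unfolding g_def by (rule rev_image_eqI) simp
      then show ?thesis using G0 by blast
    qed
    obtain Bm where Bm: "\<forall>q\<in>{ts..t}. \<bar>\<mu> q\<bar> \<le> Bm" using pc_bound[OF mu_pc] by blast
    define W where "W q = V (q, x q)" for q
    define c where "c = \<rho> \<nu>"
    have c0: "c \<ge> 0" using rho \<nu>0 by (simp add: c_def)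
    have \<rho>u: "\<rho> (norm (u q)) \<le> c" if "q \<in> {t0..t}" for q
      unfolding c_def by (rule mono_onD[OF rho(2)]) (use u\<nu>[OF that] \<nu>0 in auto)
    have gron: "W t \<le> W s * exp (integral {s..t} \<mu>)"
      if s: "s \<in> {t0..t}" and above: "\<And>q. q \<in> {s..t} \<Longrightarrow> W q \<ge> c" for s
    proof -
      have sts: "ts \<le> s" "s \<le> t" using s t0 by auto
      show ?thesis unfolding W_def
      proof (rule gronwall_V[OF V_deriv V'_cont _ sts, where g = g and G = G and B = Bm])
        show "\<And>q. q \<in> {s..t} \<Longrightarrow> 0 \<le> V (q, x q)" using V_nonneg sts by auto
        show "\<And>r. r \<in> {s..t} \<Longrightarrow> (g has_integral x r - x s) {s..r}"
          using int_shift[of t0 t g x s] xint s by auto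
        show "\<And>q. q \<in> {s..t} \<Longrightarrow> norm (g q) \<le> G" using gb s by auto
        show "\<And>q. q \<in> {s..t} \<Longrightarrow> blinfun_apply (V' (q, x q)) (1, g q) \<le> \<mu> q * V (q, x q)"
        proof -
          fix q assume q: "q \<in> {s..t}"
          have "\<rho> (norm (u q)) \<le> V (q, x q)" using \<rho>u[of q] above[OF q] q s by (auto simp: W_def)
          then show "blinfun_apply (V' (q, x q)) (1, g q) \<le> \<mu> q * V (q, x q)"
            using decay[where t=q and x="x q" and u="u q"] q sts unfolding g_def by auto
        qed
        show "\<mu> integrable_on {s..t}" by (rule pc_integrable[OF mu_pc sts(1)])
        show "\<And>q. q \<in> {s..t} \<Longrightarrow> \<bar>\<mu> q\<bar> \<le> Bm" using Bm sts by auto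
      qed
    qed
    have Wnn: "W q \<ge> 0" if "q \<in> {t0..t}" for q using V_nonneg that t0 by (auto simp: W_def)
    have Wcont: "continuous_on {t0..t} W"
    proof -
      have Vcont: "continuous_on ({ts..} \<times> UNIV) V"
        by (rule has_derivative_continuous_on) (rule V_deriv)
      show ?thesis unfolding W_def
        by (rule continuous_on_compose2[OF Vcont]) (use t0 in \<open>auto intro!: continuous_intros xcont\<close>)
    qed
    define A1 where "A1 = E * exp (- a * (t - t0)) * \<alpha>2 (norm (x t0))"
    define A2 where "A2 = E * c"
    have "\<alpha>2 (norm (x t0)) \<ge> 0" by (rule Kinf_nonneg[OF K2 norm_ge_zero])
    then have A1: "A1 \<ge> 0" using E1 unfolding A1_def by simp
    have A2: "A2 \<ge> 0" using c0 E1 by (simp add: A2_def)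
    have Wt: "W t \<le> A1 \<or> W t \<le> A2"
    proof (cases "W t \<le> c")
      case True
      moreover have "c \<le> E * c" using mult_right_mono[OF E1 c0] by simp
      ultimately have "W t \<le> A2" unfolding A2_def by linarith
      then show ?thesis by simp
    next
      case False
      show ?thesis
      proof (cases "\<exists>q\<in>{t0..t}. W q \<le> c")
        case True
        then obtain q0 where q0: "q0 \<in> {t0..t}" "W q0 \<le> c" by blast
        obtain s where s: "s \<in> {t0..<t}" "W s = c" "\<forall>q\<in>{s<..t}. W q > c"
          using last_crossing[OF t0(2) Wcont _ q0] False unfolding not_le by blast
        have "W t \<le> W s * exp (integral {s..t} \<mu>)"
        proof (rule gron)
          show "s \<in> {t0..t}" using s(1) by simp
          fix q assume q: "q \<in> {s..t}"
          show "c \<le> W q"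
          proof (cases "q = s")
            case True then show ?thesis using s(2) by simp
          next
            case False then have "q \<in> {s<..t}" using q by simp
            then show ?thesis using s(3) by (simp add: less_imp_le)
          qed
        qed
        also have "\<dots> \<le> c * E"
        proof -
          have "- a * (t - s) \<le> 0" using a s by simp
          moreover have "integral {s..t} \<mu> \<le> - a * (t - s) + \<beta>" by (rule ues) (use s t0 in auto)
          ultimately have "integral {s..t} \<mu> \<le> \<beta>" by linarith
          then have "exp (integral {s..t} \<mu>) \<le> E" by (simp add: E_def)
          then show ?thesis using c0 s(2) by (simp add: mult_left_mono del: exp_le_cancel_iff)
        qed
        finally show ?thesis by (simp add: A2_def mult.commute)
      next
        case False
        have "W t \<le> W t0 * exp (integral {t0..t} \<mu>)"
        proof (rule gron)
          show "t0 \<in> {t0..t}" using t0 by simp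
          fix q assume q: "q \<in> {t0..t}"
          then have "\<not> W q \<le> c" using False by blast
          then show "c \<le> W q" by linarith
        qed
        also have "\<dots> \<le> \<alpha>2 (norm (x t0)) * (E * exp (- a * (t - t0)))"
        proof (rule mult_mono)
          show "W t0 \<le> \<alpha>2 (norm (x t0))" using sandwich[of t0 "x t0"] t0 by (simp add: W_def)
          have "exp (integral {t0..t} \<mu>) \<le> exp (- a * (t - t0) + \<beta>)" using ues[of t0 t] t0 by simp
          then show "exp (integral {t0..t} \<mu>) \<le> E * exp (- a * (t - t0))"
            by (simp add: E_def exp_add[symmetric] algebra_simps)
          show "0 \<le> \<alpha>2 (norm (x t0))" by (rule Kinf_nonneg[OF K2 norm_ge_zero])
          show "0 \<le> exp (integral {t0..t} \<mu>)" by simp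
        qed
        finally show ?thesis by (simp add: A1_def mult_ac)
      qed
    qed
    have a1: "\<alpha>1 (norm (x t)) \<le> W t" using sandwich[of t "x t"] t0 by (simp add: W_def)
    have "norm (x t) \<le> kinv \<alpha>1 A1 \<or> norm (x t) \<le> kinv \<alpha>1 A2"
    proof (cases "W t \<le> A1")
      case True
      then have "\<alpha>1 (norm (x t)) \<le> A1" using a1 by linarith
      then show ?thesis using kinv_le[OF K1 norm_ge_zero] by blast
    next
      case False
      then have "\<alpha>1 (norm (x t)) \<le> A2" using a1 Wt by linarith
      then show ?thesis using kinv_le[OF K1 norm_ge_zero] by blast
    qed
    moreover have "kinv \<alpha>1 A1 \<ge> 0" by (rule kinv_props(1)[OF K1 A1])
    moreover have "kinv \<alpha>1 A2 \<ge> 0" by (rule kinv_props(1)[OF K1 A2])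
    moreover have "kinv \<alpha>1 A1 = \<sigma> (norm (x t0)) (t - t0)" by (simp add: A1_def \<sigma>_def)
    moreover have "kinv \<alpha>1 A2 = \<gamma>1 \<nu>" by (simp add: A2_def \<gamma>1_def c_def)
    ultimately show "norm (x t) \<le> \<sigma> (norm (x t0)) (t - t0) + \<gamma>1 (SUP s\<in>{t0..t}. norm (u s))"
      unfolding \<nu>_def by auto
  qed
qed


end
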